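(* Let $p\ge2$, $m\ge1$, $d\ge1$, $S_1>0$. Consider sine networks $s^\theta(x)=V\sin(Wx)$ with $\theta=(W,V)\in\mathbb{R}^{d\times p}\times\mathbb{R}^{p\times d}$ and $\|V\|_\infty\le S_1$. For any $\gamma>0$ and $\delta\in(0,1)$, with probability at least $1-\delta$ over a training sample $S=\{(x^{(i)},y^{(i)})\}_{i=1}^n\sim\mathcal{D}_m^n$, simultaneously for all such $\theta$, \[ \mathbb{P}_{(X,Y)\sim\mathcal{D}_m}\big[h_\theta(X)\ne Y\big]\ \le\ \widehat{\mathcal{R}}_\gamma(s^\theta)+\widetilde{\mathcal{O}}\!\left(\frac{S_1}{\gamma}\cdot\frac{p}{\sqrt n}\right)+\widetilde{\mathcal{O}}\!\left(\frac1{\sqrt n}\right). \]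
   Context: Let $[p]=\{0,\dots,p-1\}$, $e_r$ the standard basis of $\mathbb{R}^p$, $\mathcal{X}_m=\{x\in\{0,\dots,m\}^p:\|x\|_1=m\}$. $\mathcal{D}_m$ is the law of $(X,Y)$ with $s_1,\dots,s_m$ i.i.d. uniform on $[p]$, $X=\sum_i e_{s_i}$, $Y=(\sum_i s_i)\bmod p$. The predictor is $h_\theta(x)=\ell$ if $s^\theta_\ell(x)>s^\theta_k(x)$ for all $k\ne\ell$, and $\bot$ (an error) otherwise. $\|V\|_\infty$ is the matrix $\infty$-norm, i.e. the maximum over rows of the row's $\ell_1$-norm. The empirical $\gamma$-margin error is $\widehat{\mathcal{R}}_\gamma(s^\theta)=\frac1n\sum_{i=1}^n\mathbf{1}\{s^\theta_{y^{(i)}}(x^{(i)})\le\gamma+\max_{j\ne y^{(i)}}s^\theta_j(x^{(i)})\}$. $\widetilde{\mathcal{O}}(\cdot)$ hides absolute constants and polylogarithmic factors (in $n,m,p,S_1,\delta^{-1}$). *)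

theory Defs
  imports "HOL-Probability.Probability"
begin

text \<open>Inputs x are vectors in R^p represented as functions nat => real (coordinates 0..p-1).
  Weight matrices: W :: nat => nat => real (d x p, entry W j r), V (p x d, entry V k j).\<close>

text \<open>The data distribution D_m: s_1..s_m iid uniform on [p], X = sum e_{s_i}, Y = (sum s_i) mod p.\<close>
definition data_dist :: "nat \<Rightarrow> nat \<Rightarrow> ((nat \<Rightarrow> real) \<times> nat) pmf" where
  "data_dist p m =
     map_pmf (\<lambda>s. (\<lambda>r. real (card {i \<in> {..<m}. s i = r}), (\<Sum>i<m. s i) mod p))
       (Pi_pmf {..<m} 0 (\<lambda>_. pmf_of_set {..<p}))"

definition sine_net :: "nat \<Rightarrow> nat \<Rightarrow> (nat \<Rightarrow> nat \<Rightarrow> real) \<Rightarrow> (nat \<Rightarrow> nat \<Rightarrow> real)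
    \<Rightarrow> (nat \<Rightarrow> real) \<Rightarrow> nat \<Rightarrow> real" where
  "sine_net p d W V x k = (\<Sum>j<d. V k j * sin (\<Sum>r<p. W j r * x r))"

definition mat_inf_norm :: "nat \<Rightarrow> nat \<Rightarrow> (nat \<Rightarrow> nat \<Rightarrow> real) \<Rightarrow> real" where
  "mat_inf_norm p d V = Max ((\<lambda>k. \<Sum>j<d. \<bar>V k j\<bar>) ` {..<p})"

text \<open>h_theta(x) = y holds iff s_y(x) > s_k(x) for all k in [p], k /= y
  (h_theta outputs bottom, an error, when there is no strict maximiser).\<close>
definition predicts :: "nat \<Rightarrow> (nat \<Rightarrow> real) \<Rightarrow> nat \<Rightarrow> bool" where
  "predicts p s y \<longleftrightarrow> y < p \<and> (\<forall>k<p. k \<noteq> y \<longrightarrow> s k < s y)"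

definition pop_error :: "nat \<Rightarrow> nat \<Rightarrow> nat \<Rightarrow> (nat \<Rightarrow> nat \<Rightarrow> real) \<Rightarrow> (nat \<Rightarrow> nat \<Rightarrow> real) \<Rightarrow> real" where
  "pop_error p m d W V =
     measure_pmf.prob (data_dist p m) {(x, y). \<not> predicts p (sine_net p d W V x) y}"

definition margin_error :: "nat \<Rightarrow> nat \<Rightarrow> (nat \<Rightarrow> nat \<Rightarrow> real) \<Rightarrow> (nat \<Rightarrow> nat \<Rightarrow> real) \<Rightarrow> real
    \<Rightarrow> nat \<Rightarrow> (nat \<Rightarrow> (nat \<Rightarrow> real) \<times> nat) \<Rightarrow> real" where
  "margin_error p d W V \<gamma> n S =
     real (card {i \<in> {..<n}.
        sine_net p d W V (fst (S i)) (snd (S i))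
          \<le> \<gamma> + Max ((\<lambda>j. sine_net p d W V (fst (S i)) j) ` ({..<p} - {snd (S i)}))}) / real n"

definition sample_dist :: "nat \<Rightarrow> nat \<Rightarrow> nat \<Rightarrow> (nat \<Rightarrow> (nat \<Rightarrow> real) \<times> nat) pmf" where
  "sample_dist p m n = Pi_pmf {..<n} (\<lambda>_. 0, 0) (\<lambda>_. data_dist p m)"

definition logfac :: "nat \<Rightarrow> nat \<Rightarrow> nat \<Rightarrow> real \<Rightarrow> real \<Rightarrow> real" where
  "logfac n m p S1 \<delta> =
     ln (exp 1 + real n) * ln (exp 1 + real m) * ln (exp 1 + real p)
     * ln (exp 1 + S1) * ln (exp 1 + 1 / \<delta>)"

end

theory Submission
  imports Defs "HOL-Probability.Probability"
begin



lemma sin_lip: "\<bar>sin a - sin b\<bar> \<le> \<bar>a - (b::real)\<bar>"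
proof -
  define u where "u = (a + b) / 2"
  define v where "v = (a - b) / 2"
  have "a = u + v" "b = u - v" unfolding u_def v_def by (simp_all add: field_simps)
  hence "sin a - sin b = 2 * cos u * sin v" by (simp add: sin_add sin_diff)
  hence "\<bar>sin a - sin b\<bar> = 2 * \<bar>cos u\<bar> * \<bar>sin v\<bar>" by (simp add: abs_mult)
  also have "\<dots> \<le> 2 * 1 * \<bar>v\<bar>"
    by (intro mult_mono abs_sin_x_le_abs_x) (auto)
  finally show ?thesis unfolding v_def by simp
qed

lemma sin_2pi_int: "sin (x + 2 * pi * of_int N) = sin (x::real)"
proof -
  have "sin (2 * pi * of_int N) = 0"
    using sin_npi_int[of "2 * N"] by (simp add: mult_ac)
  moreover have "cos (2 * pi * of_int N) = 1"
    using cos_npi_int[of "2 * N"] by (simp add: mult_ac)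
  ultimately show ?thesis by (simp add: sin_add)
qed

lemma round_decomp:
  fixes w :: real and G1 :: nat
  assumes "G1 > 0"
  shows "\<exists>N::int. \<exists>t. w = 2 * pi * of_int N + 2 * pi * real (nat (\<lfloor>w * G1 / (2 * pi)\<rfloor> mod int G1)) / G1 + t
           \<and> 0 \<le> t \<and> t < 2 * pi / G1"
proof -
  define u where "u = w * G1 / (2 * pi)"
  define f where "f = \<lfloor>u\<rfloor>"
  have fd: "f = int G1 * (f div int G1) + f mod int G1" by simp
  have m0: "f mod int G1 \<ge> 0" using assms by simp
  have w: "w = 2 * pi * u / G1" unfolding u_def using assms by (simp add: field_simps)
  define t where "t = 2 * pi * (u - f) / G1"
  have "w = 2 * pi * of_int (f div int G1) + 2 * pi * real (nat (f mod int G1)) / G1 + t"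
  proof -
    have "real_of_int f = real G1 * of_int (f div int G1) + of_int (f mod int G1)"
      by (metis fd of_int_add of_int_mult of_int_of_nat_eq)
    moreover have "real (nat (f mod int G1)) = of_int (f mod int G1)" using m0 by simp
    ultimately show ?thesis unfolding t_def w using assms by (simp add: field_simps)
  qed
  moreover have "0 \<le> u - f" "u - f < 1" unfolding f_def by linarith+
  hence "0 \<le> t" "t < 2 * pi / G1" unfolding t_def using assms
    by (auto simp: divide_strict_right_mono)
  ultimately show ?thesis unfolding f_def u_def by blast
qed

definition gidx :: "nat \<Rightarrow> real \<Rightarrow> nat" where
  "gidx G1 w = nat (\<lfloor>w * G1 / (2 * pi)\<rfloor> mod int G1)"

definition gval :: "nat \<Rightarrow> nat \<Rightarrow> real" where
  "gval G1 a = 2 * pi * real a / G1"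

lemma round_neuron:
  fixes w x :: "nat \<Rightarrow> real" and xn :: "nat \<Rightarrow> nat" and G1 :: nat
  assumes G: "G1 > 0" and xx: "\<And>r. x r = real (xn r)" and sm: "(\<Sum>r<p. xn r) = m"
  shows "\<bar>sin (\<Sum>r<p. w r * x r) - sin (\<Sum>r<p. gval G1 (gidx G1 (w r)) * x r)\<bar> \<le> 2 * pi * m / G1"
proof -
  have "\<forall>r. \<exists>N::int. \<exists>t. w r = 2 * pi * of_int N + gval G1 (gidx G1 (w r)) + t
           \<and> 0 \<le> t \<and> t < 2 * pi / G1"
    using round_decomp[OF G] unfolding gval_def gidx_def by blast
  then obtain N T where NT: "\<And>r. w r = 2 * pi * of_int (N r) + gval G1 (gidx G1 (w r)) + T r"
      "\<And>r. 0 \<le> T r" "\<And>r. T r < 2 * pi / G1"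
    by metis
  define A where "A = (\<Sum>r<p. gval G1 (gidx G1 (w r)) * x r)"
  define B where "B = (\<Sum>r<p. T r * x r)"
  have "(\<Sum>r<p. w r * x r) = (\<Sum>r<p. 2 * pi * of_int (N r * int (xn r)) + gval G1 (gidx G1 (w r)) * x r + T r * x r)"
    by (intro sum.cong refl) (subst NT(1), simp add: xx algebra_simps)
  also have "\<dots> = A + B + 2 * pi * of_int (\<Sum>r<p. N r * int (xn r))"
    unfolding A_def B_def by (simp add: sum.distrib sum_distrib_left)
  finally have "sin (\<Sum>r<p. w r * x r) = sin (A + B)"
    by (simp only: sin_2pi_int)
  hence "\<bar>sin (\<Sum>r<p. w r * x r) - sin A\<bar> \<le> \<bar>B\<bar>" using sin_lip[of "A + B" A] by simp
  also have "\<bar>B\<bar> = B" unfolding B_def using NT(2) xx by (simp add: sum_nonneg)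
  also have "B \<le> (\<Sum>r<p. 2 * pi / G1 * x r)" unfolding B_def
    using NT(3) xx by (intro sum_mono mult_right_mono) (auto simp: less_imp_le)
  also have "\<dots> = 2 * pi / G1 * real m"
  proof -
    have "(\<Sum>r<p. 2 * pi / G1 * x r) = 2 * pi / G1 * (\<Sum>r<p. x r)" by (simp add: sum_distrib_left)
    also have "(\<Sum>r<p. x r) = real m" using sm xx by (simp flip: of_nat_sum)
    finally show ?thesis .
  qed
  finally show ?thesis unfolding A_def by simp
qed

lemma data_support:
  assumes p: "p > 0" and xy: "(x, y) \<in> set_pmf (data_dist p m)"
  shows "y < p \<and> (\<exists>xn. (\<forall>r. x r = real (xn r)) \<and> (\<Sum>r<p. xn r) = m)"
proof -
  obtain s where s: "s \<in> set_pmf (Pi_pmf {..<m} 0 (\<lambda>_. pmf_of_set {..<p}))"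
    and xe: "x = (\<lambda>r. real (card {i \<in> {..<m}. s i = r}))" and ye: "y = (\<Sum>i<m. s i) mod p"
    using xy unfolding data_dist_def by auto
  have si: "\<And>i. i < m \<Longrightarrow> s i < p"
    using s p by (auto simp: set_Pi_pmf PiE_dflt_def set_pmf_of_set lessThan_empty_iff)
  have "(\<Sum>r<p. card {i \<in> {..<m}. s i = r}) = (\<Sum>r\<in>{..<p}. \<Sum>i\<in>{i \<in> {..<m}. s i = r}. (1::nat))"
    by simp
  also have "\<dots> = (\<Sum>i\<in>{..<m}. (1::nat))"
    by (rule sum.group) (use si in auto)
  finally have "(\<Sum>r<p. card {i \<in> {..<m}. s i = r}) = m" by simp
  moreover have "y < p" using ye p by simp
  ultimately show ?thesis using xe
    by (intro conjI exI[of _ "\<lambda>r. card {i \<in> {..<m}. s i = r}"]) auto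
qed

lemma sample_support:
  assumes "S \<in> set_pmf (sample_dist p m n)" "i < n"
  shows "S i \<in> set_pmf (data_dist p m)"
  using assms by (auto simp: sample_dist_def set_Pi_pmf PiE_dflt_def)

lemma rownorm:
  assumes "p > 0" "mat_inf_norm p d V \<le> S1" "k < p"
  shows "(\<Sum>j<d. \<bar>V k j\<bar>) \<le> S1"
proof -
  have "(\<Sum>j<d. \<bar>V k j\<bar>) \<le> mat_inf_norm p d V"
    unfolding mat_inf_norm_def using assms by (intro Max_ge) auto
  thus ?thesis using assms by simp
qed




lemma hoeff_pi:
  fixes D :: "'a pmf" and f :: "'a \<Rightarrow> real" and K :: nat and \<epsilon> :: real
  assumes K: "K > 0" and ab: "a < b" and fb: "\<And>x. f x \<in> {a..b}" and e: "\<epsilon> \<ge> 0"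
  shows "measure_pmf.prob (Pi_pmf {..<K} dflt (\<lambda>_. D))
           {J. (\<Sum>t<K. f (J t)) / K \<le> measure_pmf.expectation D f - \<epsilon>}
         \<le> exp (-2 * K * \<epsilon>\<^sup>2 / (b - a)\<^sup>2)"
    and "measure_pmf.prob (Pi_pmf {..<K} dflt (\<lambda>_. D))
           {J. \<bar>(\<Sum>t<K. f (J t)) / K - measure_pmf.expectation D f\<bar> \<ge> \<epsilon>}
         \<le> 2 * exp (-2 * K * \<epsilon>\<^sup>2 / (b - a)\<^sup>2)"
proof -
  define M where "M = Pi_pmf {..<K} dflt (\<lambda>_. D)"
  have comp: "i < K \<Longrightarrow> map_pmf (\<lambda>J. J i) M = D" for i
    unfolding M_def by (subst Pi_pmf_component) auto
  have dist: "distr (measure_pmf M) borel (\<lambda>J. f (J i)) = distr (measure_pmf D) borel f" if "i < K" for i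
  proof -
    have "distr (measure_pmf M) borel (\<lambda>J. f (J i)) = distr (measure_pmf (map_pmf (\<lambda>J. J i) M)) borel f"
      unfolding map_pmf_rep_eq by (subst distr_distr) (auto simp: o_def)
    thus ?thesis using comp[OF that] by simp
  qed
  interpret Hoeffding_ineq_iid "measure_pmf M" "{..<K}" "\<lambda>i J. f (J i)" "\<lambda>J. f (J 0)" a b
    "measure_pmf.expectation D f"
  proof unfold_locales
    show "prob_space.indep_vars (measure_pmf M) (\<lambda>_. borel) (\<lambda>i J. f (J i)) {..<K}"
      unfolding M_def
      by (intro prob_space.indep_vars_compose2[OF _ indep_vars_Pi_pmf])
         (auto simp: measure_pmf.prob_space_axioms)
  next
    show "AE x in measure_pmf M. f (x 0) \<in> {a..b}" using fb by simp
  next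
    fix i assume "i \<in> {..<K}"
    thus "distr (measure_pmf M) borel (\<lambda>J. f (J i)) = distr (measure_pmf M) borel (\<lambda>J. f (J 0))"
      using dist[of i] dist[of 0] K by simp
  next
    have "measure_pmf.expectation M (\<lambda>J. f (J 0)) = measure_pmf.expectation (map_pmf (\<lambda>J. J 0) M) f"
      by simp
    also have "\<dots> = measure_pmf.expectation D f" using comp[of 0] K by simp
    finally show "measure_pmf.expectation D f \<equiv> measure_pmf.expectation M (\<lambda>J. f (J 0))" by simp
  qed simp_all
  have ne: "{..<K} \<noteq> {}" using K by auto
  show "measure_pmf.prob (Pi_pmf {..<K} dflt (\<lambda>_. D))
           {J. (\<Sum>t<K. f (J t)) / K \<le> measure_pmf.expectation D f - \<epsilon>}
         \<le> exp (-2 * K * \<epsilon>\<^sup>2 / (b - a)\<^sup>2)"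
    using Hoeffding_ineq_le'[of \<epsilon>] e ab ne by (simp add: M_def)
  show "measure_pmf.prob (Pi_pmf {..<K} dflt (\<lambda>_. D))
           {J. \<bar>(\<Sum>t<K. f (J t)) / K - measure_pmf.expectation D f\<bar> \<ge> \<epsilon>}
         \<le> 2 * exp (-2 * K * \<epsilon>\<^sup>2 / (b - a)\<^sup>2)"
    using Hoeffding_ineq_abs_ge'[of \<epsilon>] e ab ne by (simp add: M_def)
qed

lemma union_hoeff:
  fixes D :: "'z pmf" and Cov :: "'c set" and E :: "'c \<Rightarrow> 'z set" and n :: nat and \<epsilon> :: real
  assumes fin: "finite Cov" and n: "n > 0" and e: "\<epsilon> \<ge> 0"
  shows "measure_pmf.prob (Pi_pmf {..<n} dflt (\<lambda>_. D))
           {S. \<exists>c\<in>Cov. real (card {i\<in>{..<n}. S i \<in> E c}) / n \<le> measure_pmf.prob D (E c) - \<epsilon>}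
         \<le> real (card Cov) * exp (-2 * n * \<epsilon>\<^sup>2)"
proof -
  let ?P = "Pi_pmf {..<n} dflt (\<lambda>_. D)"
  have one: "measure_pmf.prob ?P {S. real (card {i\<in>{..<n}. S i \<in> E c}) / n \<le> measure_pmf.prob D (E c) - \<epsilon>}
        \<le> exp (-2 * n * \<epsilon>\<^sup>2)" for c
  proof -
    have cardeq: "real (card {i\<in>{..<n}. S i \<in> E c}) = (\<Sum>i<n. indicator (E c) (S i))" for S
    proof -
      have "(\<Sum>i<n. indicator (E c) (S i) :: real) = (\<Sum>i\<in>{i\<in>{..<n}. S i \<in> E c}. 1)"
        by (rule sum.mono_neutral_cong_right) (auto simp: indicator_def)
      thus ?thesis by simp
    qed
    have ex: "measure_pmf.expectation D (indicator (E c)) = measure_pmf.prob D (E c)" by simp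
    have "measure_pmf.prob ?P {S. (\<Sum>i<n. indicator (E c) (S i)) / n \<le> measure_pmf.expectation D (indicator (E c)) - \<epsilon>}
          \<le> exp (-2 * n * \<epsilon>\<^sup>2 / (1 - 0)\<^sup>2)"
      by (rule hoeff_pi(1)) (use n e in \<open>auto simp: indicator_def\<close>)
    thus ?thesis unfolding cardeq ex by simp
  qed
  have "measure_pmf.prob ?P (\<Union>c\<in>Cov. {S. real (card {i\<in>{..<n}. S i \<in> E c}) / n \<le> measure_pmf.prob D (E c) - \<epsilon>})
        \<le> (\<Sum>c\<in>Cov. measure_pmf.prob ?P {S. real (card {i\<in>{..<n}. S i \<in> E c}) / n \<le> measure_pmf.prob D (E c) - \<epsilon>})"
    by (rule measure_pmf.finite_measure_subadditive_finite) (use fin in auto)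
  also have "\<dots> \<le> (\<Sum>c\<in>Cov. exp (-2 * n * \<epsilon>\<^sup>2))"
    by (intro sum_mono one)
  also have "\<dots> = real (card Cov) * exp (-2 * n * \<epsilon>\<^sup>2)" by simp
  finally show ?thesis by (simp add: Bex_def Collect_ex_eq[symmetric] UNION_eq)
qed




lemma nn_swap_pmf:
  fixes A :: "'a pmf" and B :: "'b pmf"
  shows "(\<integral>\<^sup>+a. \<integral>\<^sup>+b. f a b \<partial>B \<partial>A) = (\<integral>\<^sup>+b. \<integral>\<^sup>+a. f a b \<partial>A \<partial>B)"
proof -
  have "(\<integral>\<^sup>+a. \<integral>\<^sup>+b. f a b \<partial>B \<partial>A) = (\<integral>\<^sup>+x. f (fst x) (snd x) \<partial>pair_pmf A B)"
    by (simp add: nn_integral_pair_pmf')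
  also have "\<dots> = (\<integral>\<^sup>+x. f (snd x) (fst x) \<partial>pair_pmf B A)"
    by (subst pair_commute_pmf) (simp add: case_prod_beta)
  also have "\<dots> = (\<integral>\<^sup>+b. \<integral>\<^sup>+a. f a b \<partial>A \<partial>B)"
    by (simp add: nn_integral_pair_pmf')
  finally show ?thesis .
qed

lemma maurey_exists:
  fixes P :: "'j pmf" and D :: "'z pmf" and bad :: "'j \<Rightarrow> 'z \<Rightarrow> bool" and zs :: "nat \<Rightarrow> 'z"
    and \<eta> c :: real
  assumes hb: "\<And>z. measure_pmf.prob P {J. bad J z} \<le> \<eta>" and lt: "2 * real n * \<eta> < c"
  shows "\<exists>J. real (card {i\<in>{..<n}. bad J (zs i)}) + real n * measure_pmf.prob D {z. bad J z} < c"
proof (rule ccontr)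
  assume "\<not> ?thesis"
  hence ge: "\<And>J. c \<le> real (card {i\<in>{..<n}. bad J (zs i)}) + real n * measure_pmf.prob D {z. bad J z}"
    by (meson not_less)
  have eta0: "0 \<le> \<eta>" using hb[of undefined] measure_nonneg order_trans by blast
  define F where "F J = (\<Sum>i<n. indicator {J. bad J (zs i)} J) + ennreal (real n) * emeasure D {z. bad J z}" for J
  have cardeq: "real (card {i\<in>{..<n}. bad J (zs i)}) = (\<Sum>i<n. indicator {J. bad J (zs i)} J)" for J
  proof -
    have "(\<Sum>i<n. indicator {J. bad J (zs i)} J :: real) = (\<Sum>i\<in>{i\<in>{..<n}. bad J (zs i)}. 1)"
      by (rule sum.mono_neutral_cong_right) (auto simp: indicator_def)
    thus ?thesis by simp
  qed
  have FJ: "ennreal (real (card {i\<in>{..<n}. bad J (zs i)}) + real n * measure_pmf.prob D {z. bad J z}) = F J" for J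
    unfolding F_def cardeq
    by (simp add: ennreal_plus ennreal_mult' measure_pmf.emeasure_eq_measure sum_nonneg ennreal_indicator flip: sum_ennreal)
  have c0: "ennreal c \<le> (\<integral>\<^sup>+J. F J \<partial>P)"
  proof -
    have "ennreal c = (\<integral>\<^sup>+J. ennreal c \<partial>P)" by simp
    also have "\<dots> \<le> (\<integral>\<^sup>+J. F J \<partial>P)"
      by (intro nn_integral_mono) (metis FJ ge ennreal_leI)
    finally show ?thesis .
  qed
  have i1: "(\<integral>\<^sup>+J. (\<Sum>i<n. indicator {J. bad J (zs i)} J) \<partial>P) \<le> ennreal (real n * \<eta>)"
  proof -
    have "(\<integral>\<^sup>+J. (\<Sum>i<n. indicator {J. bad J (zs i)} J) \<partial>P) = (\<Sum>i<n. emeasure P {J. bad J (zs i)})"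
      by (subst nn_integral_sum) auto
    also have "\<dots> \<le> (\<Sum>i<n. ennreal \<eta>)"
      by (intro sum_mono) (simp add: measure_pmf.emeasure_eq_measure hb ennreal_leI)
    also have "\<dots> = ennreal (real n * \<eta>)" using eta0 by (simp add: ennreal_mult' ennreal_of_nat_eq_real_of_nat)
    finally show ?thesis .
  qed
  have i2: "(\<integral>\<^sup>+J. emeasure D {z. bad J z} \<partial>P) \<le> ennreal \<eta>"
  proof -
    have "(\<integral>\<^sup>+J. emeasure D {z. bad J z} \<partial>P) = (\<integral>\<^sup>+J. \<integral>\<^sup>+z. indicator {z. bad J z} z \<partial>D \<partial>P)"
      by simp
    also have "\<dots> = (\<integral>\<^sup>+z. \<integral>\<^sup>+J. indicator {z. bad J z} z \<partial>P \<partial>D)"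
      by (rule nn_swap_pmf)
    also have "\<dots> = (\<integral>\<^sup>+z. emeasure P {J. bad J z} \<partial>D)"
      by (intro nn_integral_cong) (simp add: indicator_def flip: nn_integral_indicator)
    also have "\<dots> \<le> (\<integral>\<^sup>+z. ennreal \<eta> \<partial>D)"
      by (intro nn_integral_mono) (simp add: measure_pmf.emeasure_eq_measure hb ennreal_leI)
    also have "\<dots> = ennreal \<eta>" by simp
    finally show ?thesis .
  qed
  have "(\<integral>\<^sup>+J. F J \<partial>P) = (\<integral>\<^sup>+J. (\<Sum>i<n. indicator {J. bad J (zs i)} J) \<partial>P)
           + ennreal (real n) * (\<integral>\<^sup>+J. emeasure D {z. bad J z} \<partial>P)"
    unfolding F_def by (subst nn_integral_add) (auto simp: nn_integral_cmult)
  also have "\<dots> \<le> ennreal (real n * \<eta>) + ennreal (real n) * ennreal \<eta>"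
    by (intro add_mono i1 mult_left_mono i2) auto
  also have "\<dots> = ennreal (2 * real n * \<eta>)"
  proof -
    have "ennreal (real n) * ennreal \<eta> = ennreal (real n * \<eta>)" using eta0 by (simp add: ennreal_mult)
    moreover have "ennreal (real n * \<eta>) + ennreal (real n * \<eta>) = ennreal (2 * real n * \<eta>)"
      using eta0 by (subst ennreal_plus[symmetric]) auto
    ultimately show ?thesis by simp
  qed
  finally have "ennreal c \<le> ennreal (2 * real n * \<eta>)" using c0 by simp
  moreover have "c > 0" using lt eta0 by (smt (verit) mult_nonneg_nonneg of_nat_0_le_iff)
  ultimately show False using lt by (simp add: ennreal_le_iff2) 
qed




definition qw :: "nat \<Rightarrow> real \<Rightarrow> (nat \<Rightarrow> real) \<Rightarrow> nat \<Rightarrow> real" where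
  "qw d S1 v j = (if j < d then \<bar>v j\<bar> / S1 else if j = d then 1 - (\<Sum>i<d. \<bar>v i\<bar>) / S1 else 0)"

definition qpmf :: "nat \<Rightarrow> real \<Rightarrow> (nat \<Rightarrow> real) \<Rightarrow> nat pmf" where
  "qpmf d S1 v = embed_pmf (qw d S1 v)"

lemma pmf_qpmf:
  assumes S: "S1 > 0" and v: "(\<Sum>i<d. \<bar>v i\<bar>) \<le> S1"
  shows "pmf (qpmf d S1 v) j = qw d S1 v j"
proof -
  have nn: "\<forall>x. 0 \<le> qw d S1 v x" using S v by (auto simp: qw_def)
  have "(\<integral>\<^sup>+x. ennreal (qw d S1 v x) \<partial>count_space UNIV)
        = (\<integral>\<^sup>+x. ennreal (qw d S1 v x) * indicator {..d} x \<partial>count_space UNIV)"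
    by (intro nn_integral_cong) (auto simp: qw_def indicator_def)
  also have "\<dots> = (\<integral>\<^sup>+x. ennreal (qw d S1 v x) \<partial>count_space {..d})"
    by (simp add: nn_integral_count_space_indicator)
  also have "\<dots> = (\<Sum>x\<in>{..d}. ennreal (qw d S1 v x))"
    by (simp add: nn_integral_count_space_finite)
  also have "\<dots> = ennreal (\<Sum>x\<in>{..d}. qw d S1 v x)"
    using nn by (simp add: sum_ennreal)
  also have "(\<Sum>x\<in>{..d}. qw d S1 v x) = (\<Sum>x<d. qw d S1 v x) + qw d S1 v d"
    by (simp add: lessThan_Suc_atMost[symmetric])
  also have "\<dots> = 1" using S by (simp add: qw_def sum_divide_distrib)
  finally have "(\<integral>\<^sup>+x. ennreal (qw d S1 v x) \<partial>count_space UNIV) = 1" by simp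
  thus ?thesis unfolding qpmf_def using nn by (subst pmf_embed_pmf) auto
qed

lemma expect_qpmf:
  assumes S: "S1 > 0" and v: "(\<Sum>i<d. \<bar>v i\<bar>) \<le> S1" and fd: "f d = 0"
  shows "measure_pmf.expectation (qpmf d S1 v) f = (\<Sum>j<d. \<bar>v j\<bar> / S1 * f j)"
proof -
  have "measure_pmf.expectation (qpmf d S1 v) f = (\<Sum>j\<in>{..<d}. f j * pmf (qpmf d S1 v) j)"
  proof (rule integral_measure_pmf_real)
    fix a assume "a \<in> set_pmf (qpmf d S1 v)" "f a \<noteq> 0"
    hence "pmf (qpmf d S1 v) a \<noteq> 0" "a \<noteq> d" using fd by (auto simp: set_pmf_eq)
    thus "a \<in> {..<d}" using pmf_qpmf[OF S v] by (auto simp: qw_def split: if_splits)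
  qed simp
  also have "\<dots> = (\<Sum>j<d. \<bar>v j\<bar> / S1 * f j)"
    using pmf_qpmf[OF S v] by (intro sum.cong) (auto simp: qw_def)
  finally show ?thesis .
qed

definition sg :: "real \<Rightarrow> int" where
  "sg t = (if t > 0 then 1 else if t < 0 then -1 else 0)"

lemma sg_abs: "real_of_int (sg t) * \<bar>t\<bar> = t"
  by (simp add: sg_def)

lemma sg_range: "sg t \<in> {-1, 0, 1}"
  by (simp add: sg_def)




definition approx :: "nat \<Rightarrow> nat \<Rightarrow> real \<Rightarrow> nat \<Rightarrow> (nat \<times> nat \<Rightarrow> int \<times> (nat \<Rightarrow> nat)) \<Rightarrow> (nat \<Rightarrow> real) \<Rightarrow> nat \<Rightarrow> real" where
  "approx p K S1 G1 c x k = S1 / K * (\<Sum>t<K. real_of_int (fst (c (k, t))) * sin (\<Sum>r<p. gval G1 (snd (c (k, t)) r) * x r))"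

definition Ev :: "nat \<Rightarrow> nat \<Rightarrow> real \<Rightarrow> nat \<Rightarrow> real \<Rightarrow> (nat \<times> nat \<Rightarrow> int \<times> (nat \<Rightarrow> nat)) \<Rightarrow> ((nat \<Rightarrow> real) \<times> nat) set" where
  "Ev p K S1 G1 \<gamma> c = {(x, y). y \<ge> p \<or> (\<exists>k<p. k \<noteq> y \<and> approx p K S1 G1 c x y \<le> \<gamma> / 2 + approx p K S1 G1 c x k)}"

definition Cov :: "nat \<Rightarrow> nat \<Rightarrow> nat \<Rightarrow> (nat \<times> nat \<Rightarrow> int \<times> (nat \<Rightarrow> nat)) set" where
  "Cov p K G1 = PiE ({..<p} \<times> {..<K}) (\<lambda>_. {-1, 0, 1} \<times> PiE {..<p} (\<lambda>_. {..<G1}))"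

lemma core:
  fixes p m d n K G1 :: nat and S1 \<gamma> \<epsilon> :: real and W V :: "nat \<Rightarrow> nat \<Rightarrow> real"
  assumes p: "p \<ge> 2" and n: "n > 0" and K: "K > 0" and G: "G1 > 0" and S1: "S1 > 0" and g: "\<gamma> > 0"
    and hG: "2 * pi * m / G1 * S1 \<le> \<gamma> / 8"
    and hK: "2 * exp (-2 * K * (\<gamma> / 8)\<^sup>2 / (S1 - (- S1))\<^sup>2) \<le> 1 / (4 * p * n)"
    and S: "S \<in> set_pmf (sample_dist p m n)"
    and good: "\<forall>c\<in>Cov p K G1. measure_pmf.prob (data_dist p m) (Ev p K S1 G1 \<gamma> c) - \<epsilon>
                 < real (card {i\<in>{..<n}. S i \<in> Ev p K S1 G1 \<gamma> c}) / n"
    and V: "mat_inf_norm p d V \<le> S1"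
  shows "pop_error p m d W V \<le> margin_error p d W V \<gamma> n S + \<epsilon> + 1 / n"
proof -
  define D where "D = data_dist p m"
  define s where "s = sine_net p d W V"
  define a where "a j = restrict (\<lambda>r. gidx G1 (W j r)) {..<p}" for j
  define s' where "s' x k = (\<Sum>j<d. V k j * sin (\<Sum>r<p. gval G1 (a j r) * x r))" for x k
  define valid where "valid x \<longleftrightarrow> (\<exists>xn. (\<forall>r. x r = real (xn r)) \<and> (\<Sum>r<p. xn r) = m)" for x
  have p0: "p > 0" using p by simp
  have rn: "\<And>k. k < p \<Longrightarrow> (\<Sum>j<d. \<bar>V k j\<bar>) \<le> S1" using rownorm[OF p0 V] by blast
  have aPi: "a j \<in> PiE {..<p} (\<lambda>_. {..<G1})" for j
    unfolding a_def gidx_def using G by (auto simp: nat_less_iff)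
  have R: "\<bar>s x k - s' x k\<bar> \<le> \<gamma> / 8" if vx: "valid x" and k: "k < p" for x k
  proof -
    obtain xn where xn: "\<And>r. x r = real (xn r)" "(\<Sum>r<p. xn r) = m" using vx unfolding valid_def by blast
    have "\<bar>s x k - s' x k\<bar> = \<bar>\<Sum>j<d. V k j * (sin (\<Sum>r<p. W j r * x r) - sin (\<Sum>r<p. gval G1 (a j r) * x r))\<bar>"
      unfolding s_def s'_def sine_net_def by (simp add: sum_subtractf algebra_simps)
    also have "\<dots> \<le> (\<Sum>j<d. \<bar>V k j\<bar> * (2 * pi * m / G1))"
    proof (rule order_trans[OF sum_abs], rule sum_mono)
      fix j assume "j \<in> {..<d}"
      have "(\<Sum>r<p. gval G1 (a j r) * x r) = (\<Sum>r<p. gval G1 (gidx G1 (W j r)) * x r)"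
        unfolding a_def by (intro sum.cong) auto
      hence "\<bar>sin (\<Sum>r<p. W j r * x r) - sin (\<Sum>r<p. gval G1 (a j r) * x r)\<bar> \<le> 2 * pi * m / G1"
        using round_neuron[OF G xn(1) xn(2), of "W j"] by simp
      thus "\<bar>V k j * (sin (\<Sum>r<p. W j r * x r) - sin (\<Sum>r<p. gval G1 (a j r) * x r))\<bar> \<le> \<bar>V k j\<bar> * (2 * pi * m / G1)"
        unfolding abs_mult by (rule mult_left_mono) auto
    qed
    also have "\<dots> = (\<Sum>j<d. \<bar>V k j\<bar>) * (2 * pi * m / G1)" by (rule sum_distrib_right[symmetric])
    also have "\<dots> \<le> S1 * (2 * pi * m / G1)" by (intro mult_right_mono rn k) auto
    finally have "\<bar>s x k - s' x k\<bar> \<le> S1 * (2 * pi * m / G1)" .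
    moreover have "S1 * (2 * pi * m / G1) = 2 * pi * m / G1 * S1" by simp
    ultimately show ?thesis using hG by linarith
  qed
  define f where "f k x j = (if j < d then S1 * real_of_int (sg (V k j)) * sin (\<Sum>r<p. gval G1 (a j r) * x r) else 0)" for k x j
  have fb: "f k x j \<in> {-S1..S1}" for k x j
  proof -
    have "\<bar>real_of_int (sg (V k j)) * sin (\<Sum>r<p. gval G1 (a j r) * x r)\<bar> \<le> 1 * 1"
      unfolding abs_mult by (intro mult_mono) (auto simp: sg_def)
    hence "\<bar>f k x j\<bar> \<le> S1" unfolding f_def using S1 by (auto simp: abs_mult)
    thus ?thesis by auto
  qed
  have Ef: "measure_pmf.expectation (qpmf d S1 (V k)) (f k x) = s' x k" if k: "k < p" for k x
  proof -
    have "measure_pmf.expectation (qpmf d S1 (V k)) (f k x) = (\<Sum>j<d. \<bar>V k j\<bar> / S1 * f k x j)"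
      by (rule expect_qpmf[OF S1 rn[OF k]]) (simp add: f_def)
    also have "\<dots> = s' x k" unfolding s'_def f_def
    proof (intro sum.cong refl)
      fix j assume "j \<in> {..<d}"
      hence "\<bar>V k j\<bar> / S1 * (S1 * real_of_int (sg (V k j)) * sin (\<Sum>r<p. gval G1 (a j r) * x r))
          = (real_of_int (sg (V k j)) * \<bar>V k j\<bar>) * sin (\<Sum>r<p. gval G1 (a j r) * x r)"
        using S1 by (simp add: field_simps)
      thus "\<bar>V k j\<bar> / S1 * (if j < d then S1 * real_of_int (sg (V k j)) * sin (\<Sum>r<p. gval G1 (a j r) * x r) else 0)
          = V k j * sin (\<Sum>r<p. gval G1 (a j r) * x r)" using \<open>j \<in> {..<d}\<close> by (simp add: sg_abs)
    qed
    finally show ?thesis .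
  qed
  define bad where "bad k J z \<longleftrightarrow> \<gamma> / 8 \<le> \<bar>(\<Sum>t<K. f k (fst z) (J t)) / K - s' (fst z) k\<bar>"
    for k and J :: "nat \<Rightarrow> nat" and z :: "(nat \<Rightarrow> real) \<times> nat"
  have hb: "measure_pmf.prob (Pi_pmf {..<K} 0 (\<lambda>_. qpmf d S1 (V k))) {J. bad k J z} \<le> 1 / (4 * p * n)"
    if k: "k < p" for k z
  proof -
    have "measure_pmf.prob (Pi_pmf {..<K} 0 (\<lambda>_. qpmf d S1 (V k)))
           {J. \<gamma> / 8 \<le> \<bar>(\<Sum>t<K. f k (fst z) (J t)) / K - measure_pmf.expectation (qpmf d S1 (V k)) (f k (fst z))\<bar>}
         \<le> 2 * exp (-2 * K * (\<gamma> / 8)\<^sup>2 / (S1 - (- S1))\<^sup>2)"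
      by (rule hoeff_pi(2)) (use K S1 g fb in auto)
    thus ?thesis unfolding bad_def Ef[OF k] using hK by linarith
  qed
  have ex: "\<exists>J. real (card {i\<in>{..<n}. bad k J (S i)}) + real n * measure_pmf.prob D {z. bad k J z} < 1 / p"
    if k: "k < p" for k
  proof (rule maurey_exists[OF hb[OF k]])
    have "2 * real n * (1 / real (4 * p * n)) = 1 / (2 * real p)" using n p by simp
    also have "\<dots> < 1 / real p" using p by (simp add: divide_strict_left_mono)
    finally show "2 * real n * (1 / real (4 * p * n)) < 1 / real p" .
  qed
  then obtain Jf where Jf: "\<And>k. k < p \<Longrightarrow> real (card {i\<in>{..<n}. bad k (Jf k) (S i)}) + real n * measure_pmf.prob D {z. bad k (Jf k) z} < 1 / p"
    by metis
  have nobad: "\<not> bad k (Jf k) (S i)" if "k < p" "i < n" for k i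
  proof -
    have "real n * measure_pmf.prob D {z. bad k (Jf k) z} \<ge> 0" by simp
    moreover have "1 / real p \<le> 1" using p0 by simp
    ultimately have "real (card {i\<in>{..<n}. bad k (Jf k) (S i)}) < 1" using Jf[OF that(1)]
      by linarith
    hence "{i\<in>{..<n}. bad k (Jf k) (S i)} = {}" by (simp add: card_eq_0_iff)
    thus ?thesis using that by auto
  qed
  have sumbad: "(\<Sum>k<p. measure_pmf.prob D {z. bad k (Jf k) z}) \<le> 1 / n"
  proof -
    have "(\<Sum>k<p. real n * measure_pmf.prob D {z. bad k (Jf k) z}) \<le> (\<Sum>k<p. 1 / real p)"
    proof (rule sum_mono)
      fix k assume "k \<in> {..<p}"
      thus "real n * measure_pmf.prob D {z. bad k (Jf k) z} \<le> 1 / real p" using Jf[of k] by simp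
    qed
    hence "real n * (\<Sum>k<p. measure_pmf.prob D {z. bad k (Jf k) z}) \<le> 1"
      using p0 by (simp add: sum_distrib_left)
    thus ?thesis using n by (simp add: field_simps)
  qed
  define c where "c = restrict (\<lambda>(k, t). (if Jf k t < d then sg (V k (Jf k t)) else 0, a (Jf k t))) ({..<p} \<times> {..<K})"
  have cCov: "c \<in> Cov p K G1" unfolding Cov_def c_def using aPi by (auto simp: sg_def split: if_splits)
  have apx: "approx p K S1 G1 c x k = (\<Sum>t<K. f k x (Jf k t)) / K" if k: "k < p" for x k
  proof -
    have "S1 * (real_of_int (fst (c (k, t))) * sin (\<Sum>r<p. gval G1 (snd (c (k, t)) r) * x r)) = f k x (Jf k t)"
      if t: "t < K" for t
      using k t unfolding c_def f_def by auto
    hence "S1 * (\<Sum>t<K. real_of_int (fst (c (k, t))) * sin (\<Sum>r<p. gval G1 (snd (c (k, t)) r) * x r))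
           = (\<Sum>t<K. f k x (Jf k t))"
      by (simp add: sum_distrib_left)
    thus ?thesis unfolding approx_def by (simp add: field_simps)
  qed
  have close: "\<bar>s x k - approx p K S1 G1 c x k\<bar> < \<gamma> / 4"
    if vx: "valid x" and k: "k < p" and nb: "\<not> bad k (Jf k) (x, y)" for x y k
  proof -
    have "\<bar>approx p K S1 G1 c x k - s' x k\<bar> < \<gamma> / 8"
      using nb unfolding bad_def apx[OF k] by simp
    thus ?thesis using R[OF vx k] by linarith
  qed
  have supp: "snd z < p \<and> valid (fst z)" if "z \<in> set_pmf D" for z
    using data_support[OF p0, of "fst z" "snd z" m] that unfolding D_def valid_def by simp
  define B0 where "B0 = {z. \<not> (snd z < p \<and> valid (fst z))}"
  define B where "B = B0 \<union> (\<Union>k\<in>{..<p}. {z. bad k (Jf k) z})"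
  have incl: "{(x, y). \<not> predicts p (s x) y} \<subseteq> Ev p K S1 G1 \<gamma> c \<union> B"
  proof (clarify)
    fix x y assume np: "\<not> predicts p (s x) y" and nB: "(x, y) \<notin> B"
    hence y: "y < p" and vx: "valid x" and nbk: "\<And>k. k < p \<Longrightarrow> \<not> bad k (Jf k) (x, y)"
      unfolding B_def B0_def by auto
    obtain k where k: "k < p" "k \<noteq> y" "s x y \<le> s x k"
      using np y unfolding predicts_def by (auto simp: not_less)
    have "approx p K S1 G1 c x y \<le> \<gamma> / 2 + approx p K S1 G1 c x k"
      using close[OF vx y nbk[OF y]] close[OF vx k(1) nbk[OF k(1)]] k(3) by linarith
    thus "(x, y) \<in> Ev p K S1 G1 \<gamma> c" unfolding Ev_def using k by auto
  qed
  have pB0: "measure_pmf.prob D B0 = 0"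
    using supp unfolding B0_def by (subst measure_pmf_zero_iff) auto
  have pB: "measure_pmf.prob D B \<le> 1 / n"
  proof -
    have "measure_pmf.prob D B \<le> measure_pmf.prob D B0 + measure_pmf.prob D (\<Union>k\<in>{..<p}. {z. bad k (Jf k) z})"
      unfolding B_def by (rule measure_Un_le) auto
    also have "measure_pmf.prob D (\<Union>k\<in>{..<p}. {z. bad k (Jf k) z}) \<le> (\<Sum>k<p. measure_pmf.prob D {z. bad k (Jf k) z})"
      by (rule measure_pmf.finite_measure_subadditive_finite) auto
    finally show ?thesis using pB0 sumbad by linarith
  qed
  have pop: "pop_error p m d W V \<le> measure_pmf.prob D (Ev p K S1 G1 \<gamma> c) + 1 / n"
  proof -
    have "pop_error p m d W V \<le> measure_pmf.prob D (Ev p K S1 G1 \<gamma> c \<union> B)"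
      unfolding pop_error_def D_def[symmetric] s_def[symmetric]
      by (rule measure_pmf.finite_measure_mono[OF incl]) auto
    also have "\<dots> \<le> measure_pmf.prob D (Ev p K S1 G1 \<gamma> c) + measure_pmf.prob D B"
      by (rule measure_Un_le) auto
    finally show ?thesis using pB by linarith
  qed
  have cardle: "card {i\<in>{..<n}. S i \<in> Ev p K S1 G1 \<gamma> c}
      \<le> card {i \<in> {..<n}. s (fst (S i)) (snd (S i)) \<le> \<gamma> + Max ((\<lambda>j. s (fst (S i)) j) ` ({..<p} - {snd (S i)}))}"
  proof (rule card_mono)
    show "{i\<in>{..<n}. S i \<in> Ev p K S1 G1 \<gamma> c} \<subseteq> {i \<in> {..<n}. s (fst (S i)) (snd (S i)) \<le> \<gamma> + Max ((\<lambda>j. s (fst (S i)) j) ` ({..<p} - {snd (S i)}))}"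
    proof (rule subsetI)
      fix i assume "i \<in> {i\<in>{..<n}. S i \<in> Ev p K S1 G1 \<gamma> c}"
      hence i: "i < n" and ev: "S i \<in> Ev p K S1 G1 \<gamma> c" by auto
      obtain x y where xy: "S i = (x, y)" by fastforce
      have "S i \<in> set_pmf D" unfolding D_def by (rule sample_support[OF S i])
      hence y: "y < p" and vx: "valid x" using supp xy by auto
      obtain k where k: "k < p" "k \<noteq> y" "approx p K S1 G1 c x y \<le> \<gamma> / 2 + approx p K S1 G1 c x k"
        using ev y unfolding xy Ev_def by auto
      have nb: "\<And>k. k < p \<Longrightarrow> \<not> bad k (Jf k) (x, y)" using nobad i xy by metis
      have "s x k \<le> Max ((\<lambda>j. s x j) ` ({..<p} - {y}))"
        by (rule Max_ge) (use k in auto)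
      hence "s x y \<le> \<gamma> + Max ((\<lambda>j. s x j) ` ({..<p} - {y}))"
        using close[OF vx y nb[OF y]] close[OF vx k(1) nb[OF k(1)]] k(3) by linarith
      thus "i \<in> {i \<in> {..<n}. s (fst (S i)) (snd (S i)) \<le> \<gamma> + Max ((\<lambda>j. s (fst (S i)) j) ` ({..<p} - {snd (S i)}))}"
        using xy i by simp
    qed
  qed simp
  have "measure_pmf.prob D (Ev p K S1 G1 \<gamma> c) < real (card {i\<in>{..<n}. S i \<in> Ev p K S1 G1 \<gamma> c}) / n + \<epsilon>"
    using good cCov unfolding D_def by fastforce
  also have "real (card {i\<in>{..<n}. S i \<in> Ev p K S1 G1 \<gamma> c}) / n \<le> margin_error p d W V \<gamma> n S"
    unfolding margin_error_def s_def[symmetric]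
    by (intro divide_right_mono) (use cardle in auto)
  finally show ?thesis using pop by linarith
qed




lemma lnE_ge1: "(x::real) \<ge> 0 \<Longrightarrow> 1 \<le> ln (exp 1 + x)"
proof -
  assume "x \<ge> 0"
  hence "ln (exp 1) \<le> ln (exp 1 + x)" by (subst ln_le_cancel_iff) (auto intro: add_pos_nonneg)
  thus ?thesis by simp
qed

lemma ln_le_lnE: "(x::real) \<ge> 1 \<Longrightarrow> ln x \<le> ln (exp 1 + x)"
  by (subst ln_le_cancel_iff) (auto intro: add_pos_pos)

lemma sqrt_add_le: "a \<ge> 0 \<Longrightarrow> b \<ge> 0 \<Longrightarrow> sqrt (a\<^sup>2 + b\<^sup>2) \<le> a + b"
  by (rule real_le_lsqrt) (auto simp: power2_eq_square algebra_simps)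

lemma nat_ceil_le: "(x::real) \<ge> 0 \<Longrightarrow> real (nat \<lceil>x\<rceil>) \<le> x + 1"
proof -
  assume "x \<ge> 0"
  hence "\<lceil>x\<rceil> \<ge> 0" by simp
  hence "real (nat \<lceil>x\<rceil>) = of_int \<lceil>x\<rceil>" by simp
  thus ?thesis using of_int_ceiling_le_add_one[of x] by simp
qed

lemma nat_ceil_ge: "(x::real) \<le> real (nat \<lceil>x\<rceil>)"
proof -
  have "x \<le> of_int \<lceil>x\<rceil>" by (rule le_of_int_ceiling)
  also have "(of_int \<lceil>x\<rceil> :: real) \<le> real (nat \<lceil>x\<rceil>)" by (cases "\<lceil>x\<rceil> \<ge> 0") auto
  finally show ?thesis .
qed

lemma arith_final:
  fixes p m n K G1 :: nat and \<rho> \<delta> L lp lm ln' :: real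
  assumes p: "p \<ge> 2" and m: "m \<ge> 1" and n: "n \<ge> 1" and r: "\<rho> > 1/2" and rp: "\<rho> * p < sqrt n"
    and d: "0 < \<delta>" "\<delta> < 1"
    and K: "K = nat \<lceil>128 * \<rho>\<^sup>2 * ln (8 * real p * real n)\<rceil>" and G: "G1 = nat \<lceil>16 * pi * m * \<rho>\<rceil>"
    and lp: "lp = ln (exp 1 + p)" and lm: "lm = ln (exp 1 + m)" and ln': "ln' = ln (exp 1 + n)"
    and L: "L \<ge> lp * lm * ln'" "L \<ge> ln'" "L \<ge> ln (exp 1 + 1 / \<delta>)" "L \<ge> 1"
  shows "sqrt ((real (p * K) * (ln 3 + real p * ln (real G1)) + ln (1 / \<delta>)) / (2 * n)) + 1 / n
         \<le> 100 * \<rho> * (real p / sqrt n) * L + 100 * (1 / sqrt n) * L"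
proof -
  have lp1: "lp \<ge> 1" "lm \<ge> 1" "ln' \<ge> 1" using lnE_ge1 lp lm ln' by auto
  have ln2: "ln (2::real) < 1" by (rule ln_2_less_1)
  have sn: "sqrt n \<le> n"
  proof -
    have "real n \<le> real n ^ 2" using n by (simp add: power2_eq_square)
    hence "sqrt (real n) \<le> sqrt (real n ^ 2)" by (rule real_sqrt_le_mono)
    thus ?thesis by simp
  qed
  have sn1: "sqrt n \<ge> 1" using n by simp
  have "\<rho> * 1 \<le> \<rho> * real p" using r p by (intro mult_left_mono) auto
  hence rn: "\<rho> < n" using rp sn by linarith
  have l8: "ln (8 * real p * real n) \<le> 5 * lp * ln'"
  proof -
    have "ln (8 * real p * real n) = ln 8 + ln (real p) + ln (real n)"
      using p n by (simp add: ln_mult)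
    also have "ln (8::real) = 3 * ln 2" using ln_realpow[of 2 3] by simp
    also have "ln (real p) \<le> lp" using ln_le_lnE[of "real p"] p lp by simp
    also have "ln (real n) \<le> ln'" using ln_le_lnE[of "real n"] n ln' by simp
    finally have "ln (8 * real p * real n) \<le> 3 + lp + ln'" using ln2 by simp
    also have "\<dots> \<le> 3 * (lp * ln') + lp * ln' + lp * ln'"
    proof -
      have "lp * 1 \<le> lp * ln'" "1 * ln' \<le> lp * ln'" "1 * 1 \<le> lp * ln'" using lp1
        by (intro mult_mono; simp)+
      thus ?thesis by linarith
    qed
    finally show ?thesis by (simp add: mult_ac)
  qed
  have "1 * 1 \<le> real p * real n" using p n by (intro mult_mono) auto
  hence l8pos: "ln (8 * real p * real n) \<ge> 0" by simp
  have Kb: "real K \<le> \<rho>\<^sup>2 * (644 * lp * ln')"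
  proof -
    have "real K \<le> 128 * \<rho>\<^sup>2 * ln (8 * real p * real n) + 1" unfolding K using l8pos
      by (intro nat_ceil_le) simp
    also have "\<dots> \<le> 128 * \<rho>\<^sup>2 * (5 * lp * ln') + 4 * \<rho>\<^sup>2"
    proof -
      have "(1/2) * (1/2) \<le> \<rho> * \<rho>" using r by (intro mult_mono) auto
      hence "\<rho>\<^sup>2 \<ge> 1/4" by (simp add: power2_eq_square)
      moreover have "128 * \<rho>\<^sup>2 * ln (8 * real p * real n) \<le> 128 * \<rho>\<^sup>2 * (5 * lp * ln')"
        using l8 by (intro mult_left_mono) auto
      ultimately show ?thesis by linarith
    qed
    also have "\<dots> \<le> \<rho>\<^sup>2 * (644 * lp * ln')"
    proof -
      have "1 * 1 \<le> lp * ln'" using lp1 by (intro mult_mono) auto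
      hence "4 * \<rho>\<^sup>2 * 1 \<le> 4 * \<rho>\<^sup>2 * (lp * ln')" by (intro mult_left_mono) auto
      thus ?thesis by (simp add: algebra_simps)
    qed
    finally show ?thesis .
  qed
  have "0 < 16 * pi * m * \<rho>" using m r by simp
  hence "0 < real G1" unfolding G using nat_ceil_ge[of "16 * pi * m * \<rho>"] by linarith
  hence G1pos: "G1 \<ge> 1" by simp
  have Gb: "real G1 \<le> 65 * real m * real n"
  proof -
    have "real G1 \<le> 16 * pi * m * \<rho> + 1" unfolding G using r
      by (intro nat_ceil_le) simp
    moreover have "pi * \<rho> \<le> 4 * real n" using rn pi_less_4 r by (intro mult_mono) auto
    hence "16 * real m * (pi * \<rho>) \<le> 16 * real m * (4 * real n)" by (intro mult_left_mono) auto
    moreover have "1 * 1 \<le> real m * real n" using m n by (intro mult_mono) auto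
    ultimately show ?thesis by (simp add: algebra_simps)
  qed
  have T: "ln 3 + real p * ln (real G1) \<le> real p * (10 * lm * ln')"
  proof -
    have l3: "0 \<le> ln (3::real)" by simp
    have "ln 3 + real p * ln (real G1) \<le> real p * ln 3 + real p * ln (real G1)"
      using p l3 by (smt (verit, best) mult_le_cancel_right1 of_nat_le_iff one_le_numeral order_trans of_nat_1)
    also have "\<dots> = real p * ln (3 * real G1)" using G1pos by (simp add: ln_mult algebra_simps)
    also have "\<dots> \<le> real p * ln (195 * real m * real n)"
      using G1pos Gb by (intro mult_left_mono) auto
    also have "ln (195 * real m * real n) = ln 195 + ln (real m) + ln (real n)"
      using m n by (simp add: ln_mult)
    also have "ln (195::real) \<le> 8"
    proof -
      have "ln (195::real) \<le> ln 256" by simp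
      also have "ln (256::real) = 8 * ln 2" using ln_realpow[of 2 8] by simp
      finally show ?thesis using ln2 by simp
    qed
    also have "ln (real m) \<le> lm" using ln_le_lnE[of "real m"] m lm by simp
    also have "ln (real n) \<le> ln'" using ln_le_lnE[of "real n"] n ln' by simp
    also have "8 + lm + ln' \<le> 10 * lm * ln'"
    proof -
      have "lm * 1 \<le> lm * ln'" "1 * ln' \<le> lm * ln'" "1 * 1 \<le> lm * ln'" using lp1
        by (intro mult_mono; simp)+
      thus ?thesis by linarith
    qed
    finally show ?thesis using p by (simp add: mult_left_mono)
  qed
  have L0: "L \<ge> 0" using L by simp
  have prod: "lp * lm * ln' * ln' \<le> L * L"
    using L lp1 by (intro mult_mono) (auto intro: mult_nonneg_nonneg)
  have Q1: "real (p * K) * (ln 3 + real p * ln (real G1)) \<le> (81 * p * \<rho> * L)\<^sup>2"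
  proof -
    have "real (p * K) * (ln 3 + real p * ln (real G1)) \<le> (real p * (\<rho>\<^sup>2 * (644 * lp * ln'))) * (real p * (10 * lm * ln'))"
    proof (intro mult_mono)
      show "real (p * K) \<le> real p * (\<rho>\<^sup>2 * (644 * lp * ln'))" using Kb by (simp add: mult_left_mono)
      show "0 \<le> ln 3 + real p * ln (real G1)" using G1pos by simp
      show "0 \<le> real p * (\<rho>\<^sup>2 * (644 * lp * ln'))" using lp1 by simp
    qed (rule T)
    also have "\<dots> = 6440 * (real p)\<^sup>2 * \<rho>\<^sup>2 * (lp * lm * ln' * ln')"
      by (simp add: power2_eq_square algebra_simps)
    also have "\<dots> \<le> 6440 * (real p)\<^sup>2 * \<rho>\<^sup>2 * (L * L)"
      by (intro mult_left_mono prod) auto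
    also have "\<dots> \<le> 6561 * (real p)\<^sup>2 * \<rho>\<^sup>2 * (L * L)"
      using L0 by (intro mult_right_mono) auto
    also have "\<dots> = (81 * p * \<rho> * L)\<^sup>2"
      by (simp add: power2_eq_square algebra_simps)
    finally show ?thesis .
  qed
  have Q2: "ln (1 / \<delta>) \<le> L\<^sup>2"
  proof -
    have "ln (1 / \<delta>) \<le> ln (exp 1 + 1 / \<delta>)" using d by (subst ln_le_cancel_iff) (auto intro: add_pos_pos)
    also have "\<dots> \<le> L" using L by simp
    also have "L \<le> L\<^sup>2" using L by (simp add: power2_eq_square)
    finally show ?thesis .
  qed
  define Q where "Q = real (p * K) * (ln 3 + real p * ln (real G1)) + ln (1 / \<delta>)"
  have Q0: "Q \<ge> 0" unfolding Q_def using G1pos d by simp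
  have "sqrt (Q / (2 * n)) \<le> sqrt (Q / n)" using Q0 n by (intro real_sqrt_le_mono) (simp add: divide_left_mono)
  also have "\<dots> = sqrt Q / sqrt n" by (simp add: real_sqrt_divide)
  also have "sqrt Q \<le> sqrt ((81 * p * \<rho> * L)\<^sup>2 + L\<^sup>2)"
    unfolding Q_def using Q1 Q2 by (intro real_sqrt_le_mono) linarith
  also have "\<dots> \<le> 81 * p * \<rho> * L + L" using r L0 by (intro sqrt_add_le) auto
  finally have e1: "sqrt (Q / (2 * n)) \<le> (81 * p * \<rho> * L + L) / sqrt n" using sn1 by (simp add: divide_right_mono)
  have e2: "1 / real n \<le> L / sqrt n"
  proof -
    have "1 / real n \<le> 1 / sqrt n" using sn sn1 by (intro divide_left_mono) auto
    also have "\<dots> \<le> L / sqrt n" using L sn1 by (intro divide_right_mono) auto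
    finally show ?thesis .
  qed
  have "sqrt (Q / (2 * n)) + 1 / n \<le> (81 * p * \<rho> * L + 2 * L) / sqrt n"
    using e1 e2 by (simp add: add_divide_distrib)
  also have "\<dots> \<le> (100 * p * \<rho> * L + 100 * L) / sqrt n"
    using sn1 r L0 by (intro divide_right_mono add_mono mult_right_mono) auto
  also have "\<dots> = 100 * \<rho> * (real p / sqrt n) * L + 100 * (1 / sqrt n) * L"
    by (simp add: add_divide_distrib)
  finally show ?thesis unfolding Q_def by simp
qed




lemma card_Cov: "card (Cov p K G1) = (3 * G1 ^ p) ^ (p * K)"
proof -
  have "card (Cov p K G1) = (\<Prod>i\<in>{..<p} \<times> {..<K}. card ({-1, 0, 1::int} \<times> PiE {..<p} (\<lambda>_. {..<G1})))"
    unfolding Cov_def by (rule card_PiE) auto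
  also have "card ({-1, 0, 1::int} \<times> PiE {..<p} (\<lambda>_. {..<G1})) = 3 * G1 ^ p"
    by (simp only: card_cartesian_product card_PiE finite_lessThan) simp
  also have "(\<Prod>i\<in>{..<p} \<times> {..<K}. 3 * G1 ^ p) = (3 * G1 ^ p) ^ (p * K)"
    by (simp add: card_cartesian_product)
  finally show ?thesis .
qed

lemma finite_Cov: "finite (Cov p K G1)"
  unfolding Cov_def by (intro finite_PiE finite_cartesian_product) auto

lemma margin_one:
  assumes p: "p \<ge> 2" and S: "S \<in> set_pmf (sample_dist p m n)" and n: "n > 0"
    and V: "mat_inf_norm p d V \<le> S1" and g: "\<gamma> \<ge> 2 * S1"
  shows "margin_error p d W V \<gamma> n S = 1"
proof -
  have p0: "p > 0" using p by simp
  have bnd: "\<bar>sine_net p d W V x k\<bar> \<le> S1" if k: "k < p" for x k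
  proof -
    have "\<bar>sine_net p d W V x k\<bar> \<le> (\<Sum>j<d. \<bar>V k j * sin (\<Sum>r<p. W j r * x r)\<bar>)"
      unfolding sine_net_def by (rule sum_abs)
    also have "\<dots> \<le> (\<Sum>j<d. \<bar>V k j\<bar>)"
      by (intro sum_mono) (simp add: abs_mult mult_left_le)
    also have "\<dots> \<le> S1" by (rule rownorm[OF p0 V k])
    finally show ?thesis .
  qed
  have "{i \<in> {..<n}. sine_net p d W V (fst (S i)) (snd (S i))
          \<le> \<gamma> + Max ((\<lambda>j. sine_net p d W V (fst (S i)) j) ` ({..<p} - {snd (S i)}))} = {..<n}"
  proof safe
    fix i assume i: "i < n"
    obtain x y where xy: "S i = (x, y)" by fastforce
    have "S i \<in> set_pmf (data_dist p m)" by (rule sample_support[OF S i])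
    hence y: "y < p" using data_support[OF p0, of x y m] xy by simp
    define k where "k = (if y = 0 then 1 else 0::nat)"
    have k: "k < p" "k \<noteq> y" unfolding k_def using p by auto
    have "sine_net p d W V x k \<le> Max ((\<lambda>j. sine_net p d W V x j) ` ({..<p} - {y}))"
      by (rule Max_ge) (use k in auto)
    moreover have "sine_net p d W V x y \<le> S1" "- S1 \<le> sine_net p d W V x k"
      using bnd[OF y, of x] bnd[OF k(1), of x] by auto
    ultimately show "sine_net p d W V (fst (S i)) (snd (S i))
          \<le> \<gamma> + Max ((\<lambda>j. sine_net p d W V (fst (S i)) j) ` ({..<p} - {snd (S i)}))"
      using xy g by simp
  qed
  thus ?thesis unfolding margin_error_def using n by simp
qed

theorem mainTheorem9:
  "\<exists>(C::real) (k::nat). C \<ge> 0 \<and>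
     (\<forall>(p::nat) (m::nat) (d::nat) (S1::real) (\<gamma>::real) (\<delta>::real) (n::nat).
        p \<ge> 2 \<longrightarrow> m \<ge> 1 \<longrightarrow> d \<ge> 1 \<longrightarrow> S1 > 0 \<longrightarrow> \<gamma> > 0 \<longrightarrow>
        0 < \<delta> \<longrightarrow> \<delta> < 1 \<longrightarrow> n \<ge> 1 \<longrightarrow>
        measure_pmf.prob (sample_dist p m n)
          {S. \<forall>W V. mat_inf_norm p d V \<le> S1 \<longrightarrow>
                pop_error p m d W V
                  \<le> margin_error p d W V \<gamma> n S
                    + C * (S1 / \<gamma>) * (real p / sqrt (real n)) * logfac n m p S1 \<delta> ^ k
                    + C * (1 / sqrt (real n)) * logfac n m p S1 \<delta> ^ k}
          \<ge> 1 - \<delta>)"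
proof (intro exI[of _ "100::real"] exI[of _ "1::nat"] conjI allI impI)
  fix p m d n :: nat and S1 \<gamma> \<delta> :: real
  assume p: "p \<ge> 2" and m: "m \<ge> 1" and d: "d \<ge> 1" and S1: "S1 > 0" and g: "\<gamma> > 0"
    and d0: "0 < \<delta>" and d1: "\<delta> < 1" and n: "n \<ge> 1"
  define L where "L = logfac n m p S1 \<delta>"
  define lp where "lp = ln (exp 1 + real p)"
  define lm where "lm = ln (exp 1 + real m)"
  define ln' where "ln' = ln (exp 1 + real n)"
  define lS where "lS = ln (exp 1 + S1)"
  define ld where "ld = ln (exp 1 + 1 / \<delta>)"
  have ge1: "lp \<ge> 1" "lm \<ge> 1" "ln' \<ge> 1" "lS \<ge> 1" "ld \<ge> 1"
    unfolding lp_def lm_def ln'_def lS_def ld_def using S1 d0 by (auto intro!: lnE_ge1)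
  have Ldef: "L = ln' * lm * lp * lS * ld"
    unfolding L_def logfac_def lp_def lm_def ln'_def lS_def ld_def by simp
  have L1: "L \<ge> lp * lm * ln'" "L \<ge> ln'" "L \<ge> ld" "L \<ge> 1"
  proof -
    have m1: "\<And>a b::real. a \<ge> 1 \<Longrightarrow> b \<ge> 1 \<Longrightarrow> a * b \<ge> 1 \<and> a * b \<ge> a \<and> a * b \<ge> b"
    proof -
      fix a b :: real assume "a \<ge> 1" "b \<ge> 1"
      hence "a * 1 \<le> a * b" "1 * b \<le> a * b" "1 * 1 \<le> a * b" by (intro mult_mono; simp)+
      thus "a * b \<ge> 1 \<and> a * b \<ge> a \<and> a * b \<ge> b" using \<open>a \<ge> 1\<close> by simp
    qed
    have e1: "lp * lm * ln' \<ge> 1" using m1 ge1 by blast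
    have e2: "lS * ld \<ge> 1" using m1 ge1 by blast
    have Lp: "L = (lp * lm * ln') * (lS * ld)" unfolding Ldef by (simp add: mult_ac)
    hence Lx: "L \<ge> lp * lm * ln'" "L \<ge> 1" using m1[OF e1 e2] by auto
    show "L \<ge> lp * lm * ln'" "L \<ge> 1" by (fact Lx)+
    have "lp * lm * ln' \<ge> ln'" using m1 ge1 by (metis mult.commute)
    thus "L \<ge> ln'" using Lx by linarith
    have "L \<ge> lS * ld" using Lp m1[OF e1 e2] by auto
    moreover have "lS * ld \<ge> ld" using m1 ge1 by blast
    ultimately show "L \<ge> ld" by linarith
  qed
  define A where "A = {S. \<forall>W V. mat_inf_norm p d V \<le> S1 \<longrightarrow>
                pop_error p m d W V
                  \<le> margin_error p d W V \<gamma> n S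
                    + 100 * (S1 / \<gamma>) * (real p / sqrt (real n)) * logfac n m p S1 \<delta> ^ 1
                    + 100 * (1 / sqrt (real n)) * logfac n m p S1 \<delta> ^ 1}"
  let ?P = "sample_dist p m n"
  have compl: "measure_pmf.prob ?P A \<ge> 1 - \<delta>" if h: "measure_pmf.prob ?P (UNIV - A) \<le> \<delta>"
    using measure_pmf.prob_compl[of A ?P] h by simp
  have triv: "measure_pmf.prob ?P A \<ge> 1 - \<delta>" if hs: "set_pmf ?P \<subseteq> A"
  proof (rule compl)
    have "measure_pmf.prob ?P (UNIV - A) = 0" using hs by (subst measure_pmf_zero_iff) auto
    thus "measure_pmf.prob ?P (UNIV - A) \<le> \<delta>" using d0 by simp
  qed
  have pop1: "pop_error p m d W V \<le> 1" for W V unfolding pop_error_def by simp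
  have marg0: "margin_error p d W V \<gamma> n S \<ge> 0" for W V S unfolding margin_error_def by simp
  have sn: "sqrt (real n) > 0" using n by simp
  show "measure_pmf.prob ?P A \<ge> 1 - \<delta>" unfolding A_def[symmetric]
  proof (cases "1 \<le> 100 * (S1 / \<gamma>) * (real p / sqrt (real n)) * L")
    case True
    show ?thesis
    proof (rule triv, unfold A_def, safe)
      fix S W V assume "S \<in> set_pmf ?P" "mat_inf_norm p d V \<le> S1"
      have "0 \<le> 100 * (1 / sqrt (real n)) * L" using L1 sn by simp
      thus "pop_error p m d W V \<le> margin_error p d W V \<gamma> n S
             + 100 * (S1 / \<gamma>) * (real p / sqrt (real n)) * logfac n m p S1 \<delta> ^ 1
             + 100 * (1 / sqrt (real n)) * logfac n m p S1 \<delta> ^ 1"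
        using True pop1[of W V] marg0[of W V S] unfolding L_def by simp
    qed
  next
    case nt: False
    show ?thesis
    proof (cases "\<gamma> \<ge> 2 * S1")
      case True
      show ?thesis
      proof (rule triv, unfold A_def, safe)
        fix S W V assume S: "S \<in> set_pmf ?P" and V: "mat_inf_norm p d V \<le> S1"
        have "margin_error p d W V \<gamma> n S = 1" using margin_one[OF p S _ V True] n by simp
        moreover have "0 \<le> 100 * (S1 / \<gamma>) * (real p / sqrt (real n)) * L" "0 \<le> 100 * (1 / sqrt (real n)) * L"
          using L1 sn S1 g by auto
        ultimately show "pop_error p m d W V \<le> margin_error p d W V \<gamma> n S
             + 100 * (S1 / \<gamma>) * (real p / sqrt (real n)) * logfac n m p S1 \<delta> ^ 1
             + 100 * (1 / sqrt (real n)) * logfac n m p S1 \<delta> ^ 1"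
          using pop1[of W V] unfolding L_def by simp
      qed
    next
      case False
      define \<rho> where "\<rho> = S1 / \<gamma>"
      have r: "\<rho> > 1/2" using False g unfolding \<rho>_def by (simp add: field_simps)
      have r0: "\<rho> > 0" using r by simp
      have rp: "\<rho> * p < sqrt n"
      proof -
        have "100 * \<rho> * (real p / sqrt (real n)) * L < 1" using nt unfolding \<rho>_def by simp
        moreover have "\<rho> * (real p / sqrt (real n)) * 1 \<le> 100 * \<rho> * (real p / sqrt (real n)) * L"
          using L1 r0 sn by (intro mult_mono) auto
        ultimately have "\<rho> * real p / sqrt (real n) < 1" by simp
        thus ?thesis using sn by (simp add: field_simps)
      qed
      define K where "K = nat \<lceil>128 * \<rho>\<^sup>2 * ln (8 * real p * real n)\<rceil>"
      define G1 where "G1 = nat \<lceil>16 * pi * m * \<rho>\<rceil>"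
      have l8: "ln (8 * real p * real n) > 0"
      proof -
        have "1 * 1 \<le> real p * real n" using p n by (intro mult_mono) auto
        hence "1 < 8 * (real p * real n)" by linarith
        thus ?thesis by (simp add: mult.assoc)
      qed
      have Kge: "real K \<ge> 128 * \<rho>\<^sup>2 * ln (8 * real p * real n)" unfolding K_def by (rule nat_ceil_ge)
      have K0: "K > 0"
      proof -
        have "0 < 128 * \<rho>\<^sup>2 * ln (8 * real p * real n)" using r0 l8 by simp
        thus ?thesis using Kge by linarith
      qed
      have Gge: "real G1 \<ge> 16 * pi * m * \<rho>" unfolding G1_def by (rule nat_ceil_ge)
      have G0: "G1 > 0"
      proof -
        have "0 < 16 * pi * m * \<rho>" using r0 m by simp
        thus ?thesis using Gge by linarith
      qed
      have hG: "2 * pi * m / G1 * S1 \<le> \<gamma> / 8"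
      proof -
        have "2 * pi * m * S1 * 8 \<le> \<gamma> * G1"
        proof -
          have "\<gamma> * G1 \<ge> \<gamma> * (16 * pi * m * \<rho>)" using Gge g by (intro mult_left_mono) auto
          moreover have "\<gamma> * (16 * pi * m * \<rho>) = 2 * pi * m * S1 * 8" unfolding \<rho>_def using g by simp
          ultimately show ?thesis by linarith
        qed
        thus ?thesis using G0 by (simp add: field_simps)
      qed
      have hK: "2 * exp (-2 * K * (\<gamma> / 8)\<^sup>2 / (S1 - (- S1))\<^sup>2) \<le> 1 / (4 * p * n)"
      proof -
        have eq: "-2 * K * (\<gamma> / 8)\<^sup>2 / (S1 - (- S1))\<^sup>2 = - (K / (128 * \<rho>\<^sup>2))"
          unfolding \<rho>_def using g S1 by (simp add: field_simps power2_eq_square)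
        have "ln (8 * real p * real n) \<le> K / (128 * \<rho>\<^sup>2)" using Kge r0 by (simp add: field_simps)
        hence "exp (- (K / (128 * \<rho>\<^sup>2))) \<le> exp (- ln (8 * real p * real n))" by simp
        also have "\<dots> = inverse (8 * real p * real n)" using p n by (simp add: exp_minus)
        finally have "exp (- (K / (128 * \<rho>\<^sup>2))) \<le> inverse (8 * real p * real n)" .
        hence "2 * exp (- (K / (128 * \<rho>\<^sup>2))) \<le> 2 * inverse (8 * real p * real n)" by (rule mult_left_mono) simp_all
        moreover have "2 * inverse (8 * real p * real n) = 1 / (4 * real p * real n)"
          using p n by (simp add: field_simps)
        moreover have "real (4 * p * n) = 4 * real p * real n" by simp
        ultimately show ?thesis unfolding eq by metis
      qed
      define N where "N = card (Cov p K G1)"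
      have Nc: "real N = (3 * real G1 ^ p) ^ (p * K)" unfolding N_def card_Cov by simp
      have N0: "real N > 0" using Nc G0 by simp
      define \<epsilon> where "\<epsilon> = sqrt (ln (real N / \<delta>) / (2 * n))"
      have lnN: "ln (real N / \<delta>) = real (p * K) * (ln 3 + real p * ln (real G1)) + ln (1 / \<delta>)"
        using N0 d0 G0 unfolding Nc by (simp add: ln_div ln_realpow ln_mult distrib_left)
      have lnN0: "ln (real N / \<delta>) \<ge> 0" using lnN G0 d0 d1 by simp
      have e0: "\<epsilon> \<ge> 0" unfolding \<epsilon>_def using lnN0 by simp
      have eb: "\<epsilon> + 1 / n \<le> 100 * \<rho> * (real p / sqrt n) * L + 100 * (1 / sqrt n) * L"
        unfolding \<epsilon>_def lnN
        by (rule arith_final[OF p m n r rp d0 d1 K_def G1_def lp_def lm_def ln'_def L1(1) L1(2) _ L1(4)])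
           (use L1(3) ld_def in simp)
      define Bad where "Bad = {S. \<exists>c\<in>Cov p K G1. real (card {i\<in>{..<n}. S i \<in> Ev p K S1 G1 \<gamma> c}) / n
                               \<le> measure_pmf.prob (data_dist p m) (Ev p K S1 G1 \<gamma> c) - \<epsilon>}"
      have pBad: "measure_pmf.prob ?P Bad \<le> \<delta>"
      proof -
        have "measure_pmf.prob ?P Bad \<le> real N * exp (-2 * n * \<epsilon>\<^sup>2)"
          unfolding Bad_def sample_dist_def N_def
          by (rule union_hoeff[OF finite_Cov _ e0]) (use n in simp)
        also have "-2 * n * \<epsilon>\<^sup>2 = - ln (real N / \<delta>)"
          unfolding \<epsilon>_def using lnN0 n by simp
        also have "real N * exp (- ln (real N / \<delta>)) = \<delta>"
          using N0 d0 by (simp add: exp_minus)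
        finally show ?thesis .
      qed
      show ?thesis
      proof (rule compl)
        have "UNIV - A \<subseteq> (UNIV - set_pmf ?P) \<union> Bad"
        proof
          fix S assume SA: "S \<in> UNIV - A"
          show "S \<in> (UNIV - set_pmf ?P) \<union> Bad"
          proof (rule ccontr)
          assume "S \<notin> (UNIV - set_pmf ?P) \<union> Bad"
          hence S: "S \<in> set_pmf ?P" and nb: "S \<notin> Bad" by auto
          have "S \<in> A" unfolding A_def
          proof (intro CollectI allI impI)
          fix W V assume V: "mat_inf_norm p d V \<le> S1"
          have good: "\<forall>c\<in>Cov p K G1. measure_pmf.prob (data_dist p m) (Ev p K S1 G1 \<gamma> c) - \<epsilon>
                 < real (card {i\<in>{..<n}. S i \<in> Ev p K S1 G1 \<gamma> c}) / n"
            using nb unfolding Bad_def by auto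
          have "pop_error p m d W V \<le> margin_error p d W V \<gamma> n S + \<epsilon> + 1 / n"
            by (rule core[OF p _ K0 G0 S1 g hG hK S good V]) (use n in simp)
          thus "pop_error p m d W V \<le> margin_error p d W V \<gamma> n S
             + 100 * (S1 / \<gamma>) * (real p / sqrt (real n)) * logfac n m p S1 \<delta> ^ 1
             + 100 * (1 / sqrt (real n)) * logfac n m p S1 \<delta> ^ 1"
            using eb unfolding L_def \<rho>_def by simp
          qed
          thus False using SA by simp
          qed
        qed
        hence "measure_pmf.prob ?P (UNIV - A) \<le> measure_pmf.prob ?P ((UNIV - set_pmf ?P) \<union> Bad)"
          by (intro measure_pmf.finite_measure_mono) auto
        also have "\<dots> \<le> measure_pmf.prob ?P (UNIV - set_pmf ?P) + measure_pmf.prob ?P Bad"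
          by (rule measure_Un_le) auto
        also have "measure_pmf.prob ?P (UNIV - set_pmf ?P) = 0"
          by (subst measure_pmf_zero_iff) auto
        finally show "measure_pmf.prob ?P (UNIV - A) \<le> \<delta>" using pBad by simp
      qed
    qed
  qed
qed simp


end
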